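(* Let $G=(V,E)$ be a strongly connected digraph. Then $G$ is doubly stochasticable if and only if there exists a set $\{G_{\mathrm{cyc}}^i\}_{i=1}^{\xi}\subseteq\mathcal{C}(G)$, where $\xi\geq \operatorname{ds}(G)$, that generates $G$ and such that $G_{\mathrm{cyc}}^i$ contains all the vertices of $G$ for each $i\in\{1,\dots,\xi\}$.
   Context: A digraph $G=(V,E)$ has a finite vertex set $V=\{v_1,\dots,v_n\}$ and edge set $E\subseteq V\times V$ (self-loops $(v,v)$ are allowed). $G$ is strongly connected if there is a directed path between every ordered pair of distinct vertices. An adjacency matrix assigned to $G$ is a matrix $A=(a_{ij})\in\mathbb{R}^{n\times n}_{\geq 0}$ with $a_{ij}>0$ if $(v_i,v_j)\in E$ and $a_{ij}=0$ otherwise. $A$ is doubly stochastic if all its row sums and column sums equal $1$; $G$ is doubly stochasticable if some adjacency matrix assigned to $G$ is doubly stochastic. A cycle of $G$ is a directed path $v_{i_1},v_{i_2},\dots,v_{i_k},v_{i_1}$ with $v_{i_1},\dots,v_{i_k}$ distinct and consecutive pairs in $E$, viewed as the subdigraph with these vertices and edges (a self-loop is a cycle). $\mathcal{C}(G)$ denotes the set of subdigraphs of $G$ that are either a single vertex with no edges, a cycle of $G$, or a union of pairwise vertex-disjoint cycles of $G$. A family of subdigraphs generates $G$ if the union of their vertex sets is $V$ and the union of their edge sets is $E$. For a strongly connected $G$ for which there exists a finite subset of $\mathcal{C}(G)$ generating $G$ all of whose elements contain every vertex of $G$, the DS-character $\operatorname{ds}(G)$ is the minimum cardinality of such a subset (so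 any such subset has cardinality at least $\operatorname{ds}(G)$). *)

theory Defs
  imports Complex_Main
begin

text \<open>A digraph is given by a finite vertex set V and an edge set E \<subseteq> V \<times> V.
  A subdigraph is represented as a pair (vertex set, edge set).\<close>

definition digraph :: "'a set \<Rightarrow> ('a \<times> 'a) set \<Rightarrow> bool" where
  "digraph V E \<longleftrightarrow> finite V \<and> E \<subseteq> V \<times> V"

definition strongly_connected :: "'a set \<Rightarrow> ('a \<times> 'a) set \<Rightarrow> bool" where
  "strongly_connected V E \<longleftrightarrow> (\<forall>u\<in>V. \<forall>v\<in>V. u \<noteq> v \<longrightarrow> (u, v) \<in> E\<^sup>+)"

definition adjacency_matrix_of :: "'a set \<Rightarrow> ('a \<times> 'a) set \<Rightarrow> ('a \<Rightarrow> 'a \<Rightarrow> real) \<Rightarrow> bool" where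
  "adjacency_matrix_of V E A \<longleftrightarrow>
     (\<forall>i\<in>V. \<forall>j\<in>V. A i j \<ge> 0 \<and> (A i j > 0 \<longleftrightarrow> (i, j) \<in> E))"

definition doubly_stochastic :: "'a set \<Rightarrow> ('a \<Rightarrow> 'a \<Rightarrow> real) \<Rightarrow> bool" where
  "doubly_stochastic V A \<longleftrightarrow>
     (\<forall>i\<in>V. (\<Sum>j\<in>V. A i j) = 1) \<and> (\<forall>j\<in>V. (\<Sum>i\<in>V. A i j) = 1)"

definition doubly_stochasticable :: "'a set \<Rightarrow> ('a \<times> 'a) set \<Rightarrow> bool" where
  "doubly_stochasticable V E \<longleftrightarrow>
     (\<exists>A. adjacency_matrix_of V E A \<and> doubly_stochastic V A)"

text \<open>A cycle v_1, ..., v_k, v_1 (k \<ge> 1, distinct v_i), viewed as a subdigraph.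
  k = 1 gives a self-loop.\<close>
definition cycle_of :: "('a \<times> 'a) set \<Rightarrow> ('a set \<times> ('a \<times> 'a) set) \<Rightarrow> bool" where
  "cycle_of E H \<longleftrightarrow>
     (\<exists>vs. vs \<noteq> [] \<and> distinct vs \<and> fst H = set vs \<and>
        snd H = {(vs ! i, vs ! ((i + 1) mod length vs)) | i. i < length vs} \<and>
        snd H \<subseteq> E)"

text \<open>The set \<C>(G): single vertices without edges, or unions of (finitely many,
  at least one) pairwise vertex-disjoint cycles of G.\<close>
definition cyc_set :: "'a set \<Rightarrow> ('a \<times> 'a) set \<Rightarrow> ('a set \<times> ('a \<times> 'a) set) set" where
  "cyc_set V E =
     {({v}, {}) | v. v \<in> V} \<union>
     {(\<Union>C\<in>Cs. fst C, \<Union>C\<in>Cs. snd C) | Cs.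
        finite Cs \<and> Cs \<noteq> {} \<and> (\<forall>C\<in>Cs. cycle_of E C) \<and>
        (\<forall>C1\<in>Cs. \<forall>C2\<in>Cs. C1 \<noteq> C2 \<longrightarrow> fst C1 \<inter> fst C2 = {})}"

definition generates :: "('a set \<times> ('a \<times> 'a) set) set \<Rightarrow> 'a set \<Rightarrow> ('a \<times> 'a) set \<Rightarrow> bool" where
  "generates S V E \<longleftrightarrow> (\<Union>H\<in>S. fst H) = V \<and> (\<Union>H\<in>S. snd H) = E"

definition spanning_cyc_family :: "'a set \<Rightarrow> ('a \<times> 'a) set \<Rightarrow> ('a set \<times> ('a \<times> 'a) set) set \<Rightarrow> bool" where
  "spanning_cyc_family V E S \<longleftrightarrow>
     finite S \<and> S \<subseteq> cyc_set V E \<and> generates S V E \<and> (\<forall>H\<in>S. fst H = V)"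

text \<open>DS-character (meaningful when some spanning family exists).\<close>
definition ds :: "'a set \<Rightarrow> ('a \<times> 'a) set \<Rightarrow> nat" where
  "ds V E = (LEAST n. \<exists>S. spanning_cyc_family V E S \<and> card S = n)"

end

theory Submission
  imports Defs "HOL-Combinatorics.Permutations" "HOL-Combinatorics.Orbits"
begin

lemma hall:
  assumes "finite I" "\<And>i. i \<in> I \<Longrightarrow> finite (A i)"
    "\<And>K. K \<subseteq> I \<Longrightarrow> card K \<le> card (\<Union>(A ` K))"
  shows "\<exists>f. (\<forall>i\<in>I. f i \<in> A i) \<and> inj_on f I"
  using assms
proof (induction "card I" arbitrary: I A rule: less_induct)
  case less
  show ?case
  proof (cases "I = {}")
    case True then show ?thesis by auto
  next
    case nonempty: False
    show ?thesis
    proof (cases "\<exists>K. K \<subset> I \<and> K \<noteq> {} \<and> card (\<Union>(A ` K)) \<le> card K")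
      case True
      then obtain K where K: "K \<subset> I" "K \<noteq> {}" "card (\<Union>(A ` K)) \<le> card K" by blast
      have finK: "finite K" using K(1) less.prems(1) finite_subset by blast
      have cK: "card K < card I" using K(1) less.prems(1) psubset_card_mono by blast
      have eqK: "card (\<Union>(A ` K)) = card K" using K(3) less.prems(3)[of K] K(1) by force
      have "\<exists>f. (\<forall>i\<in>K. f i \<in> A i) \<and> inj_on f K"
      proof (rule less.hyps[OF cK finK])
        show "\<And>i. i\<in>K \<Longrightarrow> finite (A i)" using less.prems(2) K(1) by blast
        show "\<And>K'. K' \<subseteq> K \<Longrightarrow> card K' \<le> card (\<Union>(A`K'))"
          using less.prems(3) K(1) by (meson psubset_imp_subset subset_trans)
      qed
      then obtain f1 where f1: "\<forall>i\<in>K. f1 i \<in> A i" "inj_on f1 K" by blast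
      define I2 where "I2 = I - K"
      define A2 where "A2 = (\<lambda>i. A i - \<Union>(A ` K))"
      have cI2: "card I2 < card I" unfolding I2_def
      proof -
        have "card (I - K) = card I - card K" using K(1) finK by (simp add: card_Diff_subset psubset_imp_subset)
        moreover have "card K > 0" using finK K(2) by (simp add: card_gt_0_iff)
        moreover have "card K \<le> card I" using cK by simp
        ultimately show "card (I - K) < card I" by linarith
      qed
      have finU: "\<And>L. L \<subseteq> I \<Longrightarrow> finite (\<Union>(A ` L))"
        using less.prems(1,2) by (meson finite_UN_I finite_subset subsetD)
      have hall2: "card L \<le> card (\<Union>(A2 ` L))" if L: "L \<subseteq> I2" for L
      proof -
        have LK: "L \<inter> K = {}" "L \<union> K \<subseteq> I" using L K(1) unfolding I2_def by auto
        have finL: "finite L" using LK(2) less.prems(1) finite_subset by blast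
        have "\<Union>(A2 ` L) = \<Union>(A ` (L \<union> K)) - \<Union>(A ` K)" unfolding A2_def by auto
        then have "card (\<Union>(A2 ` L)) = card (\<Union>(A ` (L \<union> K))) - card (\<Union>(A ` K))"
          using finU[OF LK(2)] by (simp add: card_Diff_subset)
        moreover have "card (L \<union> K) \<le> card (\<Union>(A ` (L \<union> K)))" using less.prems(3) LK(2) by blast
        moreover have "card (L \<union> K) = card L + card K" using LK(1) finL finK card_Un_disjoint by blast
        ultimately show ?thesis using eqK by linarith
      qed
      have "\<exists>f. (\<forall>i\<in>I2. f i \<in> A2 i) \<and> inj_on f I2"
      proof (rule less.hyps[OF cI2])
        show "finite I2" unfolding I2_def using less.prems(1) by simp
        show "\<And>i. i\<in>I2 \<Longrightarrow> finite (A2 i)" unfolding I2_def A2_def using less.prems(2) by simp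
        show "\<And>K'. K' \<subseteq> I2 \<Longrightarrow> card K' \<le> card (\<Union>(A2`K'))" by (rule hall2)
      qed
      then obtain f2 where f2: "\<forall>i\<in>I2. f2 i \<in> A2 i" "inj_on f2 I2" by blast
      define f where "f = (\<lambda>i. if i \<in> K then f1 i else f2 i)"
      have "\<forall>i\<in>I. f i \<in> A i" using f1 f2 unfolding f_def I2_def A2_def by auto
      moreover have "inj_on f I"
      proof (rule inj_onI)
        fix x y assume xy: "x \<in> I" "y \<in> I" "f x = f y"
        show "x = y"
        proof (cases "x \<in> K"; cases "y \<in> K")
          assume "x \<in> K" "y \<in> K" then show ?thesis using xy f1(2) unfolding f_def by (auto dest: inj_onD)
        next
          assume "x \<notin> K" "y \<notin> K" then show ?thesis using xy f2(2) unfolding f_def I2_def by (auto dest: inj_onD)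
        next
          assume a: "x \<in> K" "y \<notin> K"
          have "f x \<in> A x" using a f1 unfolding f_def by auto
          moreover have "f y \<notin> A x" using a f2(1) xy(1,2) unfolding f_def I2_def A2_def by auto
          ultimately show ?thesis using xy by auto
        next
          assume a: "x \<notin> K" "y \<in> K"
          have "f y \<in> A y" using a f1 unfolding f_def by auto
          moreover have "f x \<notin> A y" using a f2(1) xy(1,2) unfolding f_def I2_def A2_def by auto
          ultimately show ?thesis using xy by auto
        qed
      qed
      ultimately show ?thesis by blast
    next
      case False
      then have strict: "\<And>K. K \<subset> I \<Longrightarrow> K \<noteq> {} \<Longrightarrow> card K < card (\<Union>(A ` K))"
        using not_le by blast
      obtain i0 where i0: "i0 \<in> I" using nonempty by blast
      have "card {i0} \<le> card (A i0)" using less.prems(3)[of "{i0}"] i0 by simp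
      then have "A i0 \<noteq> {}" by auto
      then obtain x where x: "x \<in> A i0" by blast
      define I2 where "I2 = I - {i0}"
      define A2 where "A2 = (\<lambda>i. A i - {x})"
      have "card I > 0" using i0 less.prems(1) card_gt_0_iff by blast
      then have cI2: "card I2 < card I" unfolding I2_def using i0 less.prems(1) by simp
      have hall2: "card L \<le> card (\<Union>(A2 ` L))" if L: "L \<subseteq> I2" for L
      proof (cases "L = {}")
        case True then show ?thesis by simp
      next
        case False
        have "L \<subset> I" using L i0 unfolding I2_def by auto
        then have "card L < card (\<Union>(A ` L))" using strict False by blast
        moreover have c2: "\<Union>(A2 ` L) = \<Union>(A ` L) - {x}" unfolding A2_def by auto
        moreover have c3: "card (\<Union>(A ` L)) - 1 \<le> card (\<Union>(A ` L) - {x})"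
        proof (cases "x \<in> \<Union>(A ` L)")
          case True
          have "finite (\<Union>(A ` L))" using L less.prems(1,2) unfolding I2_def
            by (meson Diff_subset finite_UN_I finite_subset subsetD)
          then show ?thesis using True by (simp add: card_Diff_singleton)
        next
          case False then show ?thesis by simp
        qed
        ultimately have "card (\<Union>(A ` L)) - 1 \<le> card (\<Union>(A2 ` L))" by simp
        with \<open>card L < card (\<Union>(A ` L))\<close> show ?thesis by linarith
      qed
      have "\<exists>f. (\<forall>i\<in>I2. f i \<in> A2 i) \<and> inj_on f I2"
      proof (rule less.hyps[OF cI2])
        show "finite I2" unfolding I2_def using less.prems(1) by simp
        show "\<And>i. i\<in>I2 \<Longrightarrow> finite (A2 i)" unfolding I2_def A2_def using less.prems(2) by simp
        show "\<And>K'. K' \<subseteq> I2 \<Longrightarrow> card K' \<le> card (\<Union>(A2`K'))" by (rule hall2)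
      qed
      then obtain f2 where f2: "\<forall>i\<in>I2. f2 i \<in> A2 i" "inj_on f2 I2" by blast
      define f where "f = f2(i0 := x)"
      have "\<forall>i\<in>I. f i \<in> A i" using f2 x unfolding f_def I2_def A2_def by auto
      moreover have "inj_on f I"
      proof (rule inj_onI)
        fix a b assume ab: "a \<in> I" "b \<in> I" "f a = f b"
        show "a = b"
        proof (cases "a = i0"; cases "b = i0")
          assume "a \<noteq> i0" "b \<noteq> i0" then show ?thesis using ab f2(2) unfolding f_def I2_def by (auto dest: inj_onD)
        next
          assume "a = i0" "b \<noteq> i0" then have "f b \<noteq> x" using f2(1) ab unfolding f_def I2_def A2_def by auto
          then show ?thesis using ab \<open>a = i0\<close> unfolding f_def by simp
        next
          assume "a \<noteq> i0" "b = i0" then have "f a \<noteq> x" using f2(1) ab unfolding f_def I2_def A2_def by auto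
          then show ?thesis using ab \<open>b = i0\<close> unfolding f_def by simp
        qed simp
      qed
      ultimately show ?thesis by blast
    qed
  qed
qed

lemma hall_matrix:
  fixes B :: "'a \<Rightarrow> 'a \<Rightarrow> real"
  assumes fin: "finite V" and nn: "\<And>i j. i\<in>V \<Longrightarrow> j\<in>V \<Longrightarrow> B i j \<ge> 0"
    and row: "\<And>i. i\<in>V \<Longrightarrow> (\<Sum>j\<in>V. B i j) = 1" and col: "\<And>j. j\<in>V \<Longrightarrow> (\<Sum>i\<in>V. B i j) = 1"
    and i0: "i0\<in>V" and j0: "j0\<in>V" and pos: "B i0 j0 > 0"
    and K: "K \<subseteq> V - {i0}"
  shows "card K \<le> card (\<Union>k\<in>K. {j\<in>V-{j0}. B k j > 0})"
proof -
  define N' where "N' = {j\<in>V. \<exists>i\<in>K. B i j > 0}"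
  have NN: "(\<Union>k\<in>K. {j\<in>V-{j0}. B k j > 0}) = N' - {j0}" unfolding N'_def by auto
  have finK: "finite K" using K fin finite_subset by blast
  have finN: "finite N'" unfolding N'_def using fin by simp
  have KV: "K \<subseteq> V" using K by blast
  have "(\<Sum>i\<in>K. \<Sum>j\<in>V. B i j) = (\<Sum>i\<in>K. 1)"
  proof (rule sum.cong[OF refl])
    fix i assume "i \<in> K"
    then have "i \<in> V" using KV by blast
    then show "(\<Sum>j\<in>V. B i j) = 1" by (rule row)
  qed
  then have "real (card K) = (\<Sum>i\<in>K. \<Sum>j\<in>V. B i j)" by simp
  also have "\<dots> = (\<Sum>i\<in>K. \<Sum>j\<in>N'. B i j)"
  proof (rule sum.cong[OF refl])
    fix i assume i: "i \<in> K"
    show "(\<Sum>j\<in>V. B i j) = (\<Sum>j\<in>N'. B i j)"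
    proof (rule sum.mono_neutral_right[OF fin])
      show "N' \<subseteq> V" unfolding N'_def by auto
      show "\<forall>j\<in>V - N'. B i j = 0"
      proof
        fix j assume j: "j \<in> V - N'"
        then have "\<not> B i j > 0" using i unfolding N'_def by blast
        moreover have "B i j \<ge> 0" using nn i KV j by blast
        ultimately show "B i j = 0" by linarith
      qed
    qed
  qed
  also have "\<dots> = (\<Sum>j\<in>N'. \<Sum>i\<in>K. B i j)" by (rule sum.swap)
  also have "\<dots> \<le> (\<Sum>j\<in>N'. 1 - B i0 j)"
  proof (rule sum_mono)
    fix j assume j: "j \<in> N'"
    then have jV: "j \<in> V" unfolding N'_def by auto
    have "(\<Sum>i\<in>K. B i j) \<le> (\<Sum>i\<in>V-{i0}. B i j)"
      using K nn jV fin by (intro sum_mono2) auto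
    also have "\<dots> = 1 - B i0 j" using sum_diff1[of V "\<lambda>i. B i j" i0] fin i0 col[OF jV] by simp
    finally show "(\<Sum>i\<in>K. B i j) \<le> 1 - B i0 j" .
  qed
  also have "\<dots> = real (card N') - (\<Sum>j\<in>N'. B i0 j)" by (simp add: sum_subtractf)
  finally have main: "real (card K) \<le> real (card N') - (\<Sum>j\<in>N'. B i0 j)" .
  have nn2: "(\<Sum>j\<in>N'. B i0 j) \<ge> 0" using nn i0 unfolding N'_def by (intro sum_nonneg) auto
  show ?thesis
  proof (cases "j0 \<in> N'")
    case True
    have "B i0 j0 \<le> (\<Sum>j\<in>N'. B i0 j)"
      using True finN nn i0 unfolding N'_def by (intro member_le_sum) auto
    then have "card K < card N'" using main pos by linarith
    moreover have "card (N' - {j0}) = card N' - 1" using True finN by simp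
    ultimately show ?thesis using NN by simp
  next
    case False
    then have "card K \<le> card N'" using main nn2 by linarith
    then show ?thesis using NN False by simp
  qed
qed

lemma perm_through:
  fixes B :: "'a \<Rightarrow> 'a \<Rightarrow> real"
  assumes fin: "finite V" and nn: "\<And>i j. i\<in>V \<Longrightarrow> j\<in>V \<Longrightarrow> B i j \<ge> 0"
    and row: "\<And>i. i\<in>V \<Longrightarrow> (\<Sum>j\<in>V. B i j) = 1" and col: "\<And>j. j\<in>V \<Longrightarrow> (\<Sum>i\<in>V. B i j) = 1"
    and i0: "i0\<in>V" and j0: "j0\<in>V" and pos: "B i0 j0 > 0"
  shows "\<exists>\<sigma>. \<sigma> permutes V \<and> \<sigma> i0 = j0 \<and> (\<forall>k\<in>V. B k (\<sigma> k) > 0)"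
proof -
  define Af where "Af = (\<lambda>k. {j\<in>V-{j0}. B k j > 0})"
  have "\<exists>f. (\<forall>i\<in>V-{i0}. f i \<in> Af i) \<and> inj_on f (V-{i0})"
  proof (rule hall)
    show "finite (V - {i0})" using fin by simp
    show "\<And>i. i \<in> V - {i0} \<Longrightarrow> finite (Af i)" unfolding Af_def using fin by simp
    show "\<And>K. K \<subseteq> V - {i0} \<Longrightarrow> card K \<le> card (\<Union>(Af ` K))"
      unfolding Af_def using hall_matrix[OF assms] by blast
  qed
  then obtain f where f: "\<forall>i\<in>V-{i0}. f i \<in> Af i" "inj_on f (V-{i0})" by blast
  define \<sigma> where "\<sigma> = (\<lambda>k. if k = i0 then j0 else if k \<in> V then f k else k)"
  have img: "\<sigma> ` V \<subseteq> V" using f(1) j0 unfolding \<sigma>_def Af_def by auto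
  have inj: "inj_on \<sigma> V"
  proof (rule inj_onI)
    fix x y assume xy: "x \<in> V" "y \<in> V" "\<sigma> x = \<sigma> y"
    show "x = y"
    proof (cases "x = i0"; cases "y = i0")
      assume "x \<noteq> i0" "y \<noteq> i0" then show ?thesis using xy f(2) unfolding \<sigma>_def by (auto dest: inj_onD)
    next
      assume "x = i0" "y \<noteq> i0" then show ?thesis using xy f(1) unfolding \<sigma>_def Af_def by auto
    next
      assume "x \<noteq> i0" "y = i0" then show ?thesis using xy f(1) unfolding \<sigma>_def Af_def by auto
    qed simp
  qed
  have "bij_betw \<sigma> V V" using endo_inj_surj[OF fin img inj] inj by (simp add: bij_betw_def)
  then have "\<sigma> permutes V" by (rule bij_imp_permutes) (use i0 in \<open>auto simp: \<sigma>_def\<close>)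
  moreover have "\<forall>k\<in>V. B k (\<sigma> k) > 0" using f(1) pos unfolding \<sigma>_def Af_def by auto
  ultimately show ?thesis unfolding \<sigma>_def by auto
qed

lemma orbit_cycle:
  assumes fin: "finite V" and \<sigma>: "\<sigma> permutes V" and E: "\<forall>k\<in>V. (k, \<sigma> k) \<in> E" and x: "x \<in> V"
  shows "cycle_of E (orbit \<sigma> x, {(y, \<sigma> y) | y. y \<in> orbit \<sigma> x})"
proof -
  have perm: "permutation \<sigma>" using fin \<sigma> permutation_permutes by blast
  have xo: "x \<in> orbit \<sigma> x" by (rule permutation_self_in_orbit[OF perm])
  define n where "n = funpow_dist1 \<sigma> x x"
  define vs where "vs = map (\<lambda>k. (\<sigma> ^^ k) x) [0..<n]"
  have npos: "0 < n" unfolding n_def by simp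
  have nx: "(\<sigma> ^^ n) x = x" unfolding n_def by (rule funpow_dist1_prop[OF xo])
  have len: "length vs = n" unfolding vs_def by simp
  have nth: "\<And>i. i < n \<Longrightarrow> vs ! i = (\<sigma> ^^ i) x" unfolding vs_def by simp
  have oc: "orbit \<sigma> x = (\<lambda>k. (\<sigma> ^^ k) x) ` {0..<n}" unfolding n_def by (rule orbit_conv_funpow_dist1[OF xo])
  have setvs: "set vs = orbit \<sigma> x" unfolding oc vs_def by simp
  have inj: "inj_on (\<lambda>k. (\<sigma> ^^ k) x) {0..<n}" unfolding n_def by (rule inj_on_funpow_dist1[OF xo])
  have dist: "distinct vs" unfolding vs_def distinct_map using inj by simp
  have edges: "{(vs ! i, vs ! ((i + 1) mod length vs)) | i. i < length vs} = {(y, \<sigma> y) | y. y \<in> orbit \<sigma> x}"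
  proof -
    have "\<And>i. i < n \<Longrightarrow> vs ! ((i + 1) mod n) = \<sigma> (vs ! i)"
    proof -
      fix i assume i: "i < n"
      have "vs ! ((i + 1) mod n) = (\<sigma> ^^ ((i + 1) mod n)) x" using nth npos by simp
      also have "\<dots> = (\<sigma> ^^ (i + 1)) x" by (rule funpow_mod_eq[OF nx])
      also have "\<dots> = \<sigma> (vs ! i)" using nth[OF i] by simp
      finally show "vs ! ((i + 1) mod n) = \<sigma> (vs ! i)" .
    qed
    then have "{(vs ! i, vs ! ((i + 1) mod length vs)) | i. i < length vs} = {(vs ! i, \<sigma> (vs ! i)) | i. i < length vs}"
      using len by auto
    also have "\<dots> = {(y, \<sigma> y) | y. y \<in> set vs}" by (auto simp: in_set_conv_nth)
    finally show ?thesis using setvs by simp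
  qed
  have sub: "orbit \<sigma> x \<subseteq> V" by (rule permutes_orbit_subset[OF \<sigma> x])
  show ?thesis unfolding cycle_of_def
  proof (intro exI[of _ vs] conjI)
    show "vs \<noteq> []" using len npos by auto
    show "distinct vs" by (rule dist)
    show "fst (orbit \<sigma> x, {(y, \<sigma> y) | y. y \<in> orbit \<sigma> x}) = set vs" using setvs by simp
    show "snd (orbit \<sigma> x, {(y, \<sigma> y) | y. y \<in> orbit \<sigma> x}) = {(vs ! i, vs ! ((i + 1) mod length vs)) | i. i < length vs}"
      using edges by simp
    show "snd (orbit \<sigma> x, {(y, \<sigma> y) | y. y \<in> orbit \<sigma> x}) \<subseteq> E" using sub E by auto
  qed
qed

lemma perm_cyc:
  assumes fin: "finite V" and \<sigma>: "\<sigma> permutes V" and E: "\<forall>k\<in>V. (k, \<sigma> k) \<in> E" and ne: "V \<noteq> {}"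
  shows "(V, {(k, \<sigma> k) | k. k \<in> V}) \<in> cyc_set V E"
proof -
  have perm: "permutation \<sigma>" using fin \<sigma> permutation_permutes by blast
  define Cx where "Cx = (\<lambda>x. (orbit \<sigma> x, {(y, \<sigma> y) | y. y \<in> orbit \<sigma> x}))"
  define Cs where "Cs = Cx ` V"
  have selfo: "\<And>x. x \<in> orbit \<sigma> x" by (rule permutation_self_in_orbit[OF perm])
  have sub: "\<And>x. x \<in> V \<Longrightarrow> orbit \<sigma> x \<subseteq> V" by (rule permutes_orbit_subset[OF \<sigma>])
  have U1: "(\<Union>C\<in>Cs. fst C) = V" unfolding Cs_def Cx_def using sub selfo by auto
  have U2: "(\<Union>C\<in>Cs. snd C) = {(k, \<sigma> k) | k. k \<in> V}"
  proof
    show "(\<Union>C\<in>Cs. snd C) \<subseteq> {(k, \<sigma> k) | k. k \<in> V}"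
    proof
      fix p assume "p \<in> (\<Union>C\<in>Cs. snd C)"
      then obtain x y where "x \<in> V" "y \<in> orbit \<sigma> x" "p = (y, \<sigma> y)" unfolding Cs_def Cx_def by auto
      then show "p \<in> {(k, \<sigma> k) | k. k \<in> V}" using sub by blast
    qed
    show "{(k, \<sigma> k) | k. k \<in> V} \<subseteq> (\<Union>C\<in>Cs. snd C)"
    proof
      fix p assume "p \<in> {(k, \<sigma> k) | k. k \<in> V}"
      then obtain k where k: "k \<in> V" "p = (k, \<sigma> k)" by blast
      then have "p \<in> snd (Cx k)" unfolding Cx_def using selfo by auto
      moreover have "Cx k \<in> Cs" unfolding Cs_def using k by blast
      ultimately show "p \<in> (\<Union>C\<in>Cs. snd C)" by blast
    qed
  qed
  have cyc: "\<forall>C\<in>Cs. cycle_of E C" unfolding Cs_def Cx_def using orbit_cycle[OF fin \<sigma> E] by blast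
  have disj: "\<forall>C1\<in>Cs. \<forall>C2\<in>Cs. C1 \<noteq> C2 \<longrightarrow> fst C1 \<inter> fst C2 = {}"
  proof (intro ballI impI)
    fix C1 C2 assume C: "C1 \<in> Cs" "C2 \<in> Cs" "C1 \<noteq> C2"
    then obtain x1 x2 where x: "C1 = Cx x1" "C2 = Cx x2" unfolding Cs_def by blast
    show "fst C1 \<inter> fst C2 = {}"
    proof (rule ccontr)
      assume "fst C1 \<inter> fst C2 \<noteq> {}"
      then obtain z where z: "z \<in> orbit \<sigma> x1" "z \<in> orbit \<sigma> x2" using x unfolding Cx_def by auto
      have "orbit \<sigma> z = orbit \<sigma> x1" using orbit_cyclic_eq3[OF cyclic_on_orbit'[OF perm] z(1)] .
      moreover have "orbit \<sigma> z = orbit \<sigma> x2" using orbit_cyclic_eq3[OF cyclic_on_orbit'[OF perm] z(2)] .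
      ultimately have "Cx x1 = Cx x2" unfolding Cx_def by simp
      then show False using C x by simp
    qed
  qed
  have fC: "finite Cs" "Cs \<noteq> {}" unfolding Cs_def using fin ne by auto
  have eq: "(V, {(k, \<sigma> k) | k. k \<in> V}) = (\<Union>C\<in>Cs. fst C, \<Union>C\<in>Cs. snd C)" using U1 U2 by simp
  have ex: "\<exists>Cs'. (V, {(k, \<sigma> k) | k. k \<in> V}) = (\<Union>C\<in>Cs'. fst C, \<Union>C\<in>Cs'. snd C) \<and>
        finite Cs' \<and> Cs' \<noteq> {} \<and> (\<forall>C\<in>Cs'. cycle_of E C) \<and>
        (\<forall>C1\<in>Cs'. \<forall>C2\<in>Cs'. C1 \<noteq> C2 \<longrightarrow> fst C1 \<inter> fst C2 = {})"
    using eq fC cyc disj by blast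
  show ?thesis unfolding cyc_set_def by (intro UnI2 CollectI) (rule ex)
qed

lemma mod_succ: "i < n \<Longrightarrow> (i + 1) mod (n::nat) = (if Suc i = n then 0 else Suc i)"
  by auto

lemma cycle_src:
  assumes "cycle_of E C" "(a, b) \<in> snd C"
  shows "a \<in> fst C" "b \<in> fst C"
proof -
  obtain vs where vs: "vs \<noteq> []" "fst C = set vs"
    "snd C = {(vs ! i, vs ! ((i + 1) mod length vs)) | i. i < length vs}"
  proof -
    from assms(1) obtain vs where "vs \<noteq> [] \<and> distinct vs \<and> fst C = set vs \<and>
        snd C = {(vs ! i, vs ! ((i + 1) mod length vs)) | i. i < length vs} \<and> snd C \<subseteq> E"
      unfolding cycle_of_def by (rule exE)
    then show ?thesis by (elim conjE) (rule that; assumption)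
  qed
  then obtain i where i: "i < length vs" "a = vs ! i" "b = vs ! ((i + 1) mod length vs)" using assms(2) by auto
  then show "a \<in> fst C" using vs by simp
  have "(i + 1) mod length vs < length vs" using vs(1) by simp
  then show "b \<in> fst C" using vs i by simp
qed

lemma cycle_out:
  assumes "cycle_of E C" "u \<in> fst C"
  shows "\<exists>!j. (u, j) \<in> snd C" "\<exists>!j. (j, u) \<in> snd C"
proof -
  obtain vs where vs: "vs \<noteq> []" "distinct vs" "fst C = set vs"
    "snd C = {(vs ! i, vs ! ((i + 1) mod length vs)) | i. i < length vs}"
  proof -
    from assms(1) obtain vs where "vs \<noteq> [] \<and> distinct vs \<and> fst C = set vs \<and>
        snd C = {(vs ! i, vs ! ((i + 1) mod length vs)) | i. i < length vs} \<and> snd C \<subseteq> E"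
      unfolding cycle_of_def by (rule exE)
    then show ?thesis by (elim conjE) (rule that; assumption)
  qed
  define n where "n = length vs"
  have npos: "0 < n" using vs(1) unfolding n_def by simp
  obtain k where k: "k < n" "u = vs ! k" using assms(2) vs(3) unfolding n_def by (auto simp: in_set_conv_nth)
  have memE: "\<And>a b. (a, b) \<in> snd C \<longleftrightarrow> (\<exists>i<n. a = vs ! i \<and> b = vs ! ((i + 1) mod n))"
    using vs(4) unfolding n_def by auto
  have idx: "\<And>i. i < n \<Longrightarrow> vs ! i = vs ! k \<longleftrightarrow> i = k"
    using vs(2) k(1) unfolding n_def by (simp add: nth_eq_iff_index_eq)
  show "\<exists>!j. (u, j) \<in> snd C"
  proof (rule ex1I)
    show "(u, vs ! ((k + 1) mod n)) \<in> snd C" using memE k by blast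
    fix j assume "(u, j) \<in> snd C"
    then obtain i where "i < n" "u = vs ! i" "j = vs ! ((i + 1) mod n)" using memE by blast
    then show "j = vs ! ((k + 1) mod n)" using idx k by metis
  qed
  define p where "p = (if k = 0 then n - 1 else k - 1)"
  have p: "p < n" "(p + 1) mod n = k" using k npos unfolding p_def by (auto simp: mod_succ)
  show "\<exists>!j. (j, u) \<in> snd C"
  proof (rule ex1I)
    show "(vs ! p, u) \<in> snd C" using memE k p by metis
    fix j assume "(j, u) \<in> snd C"
    then obtain i where i: "i < n" "j = vs ! i" "u = vs ! ((i + 1) mod n)" using memE by blast
    have "(i + 1) mod n < n" using npos by simp
    then have "(i + 1) mod n = k" using idx i(3) k(2) by metis
    then have "(i + 1) mod n = (p + 1) mod n" using p(2) by simp
    then have "i = p" using mod_succ[OF i(1)] mod_succ[OF p(1)] by (auto split: if_splits)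
    then show "j = vs ! p" using i by simp
  qed
qed

lemma cyc_cover:
  assumes H: "H \<in> cyc_set V E" and ne: "snd H \<noteq> {}" and u: "u \<in> fst H"
  shows "\<exists>!j. (u, j) \<in> snd H" "\<exists>!j. (j, u) \<in> snd H"
proof -
  obtain Cs where Cs: "H = (\<Union>C\<in>Cs. fst C, \<Union>C\<in>Cs. snd C)" "\<forall>C\<in>Cs. cycle_of E C"
    "\<forall>C1\<in>Cs. \<forall>C2\<in>Cs. C1 \<noteq> C2 \<longrightarrow> fst C1 \<inter> fst C2 = {}"
  proof -
    have "H \<notin> {({v}, {}) | v. v \<in> V}" using ne by auto
    then have "H \<in> {(\<Union>C\<in>Cs. fst C, \<Union>C\<in>Cs. snd C) | Cs.
        finite Cs \<and> Cs \<noteq> {} \<and> (\<forall>C\<in>Cs. cycle_of E C) \<and>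
        (\<forall>C1\<in>Cs. \<forall>C2\<in>Cs. C1 \<noteq> C2 \<longrightarrow> fst C1 \<inter> fst C2 = {})}"
      using H unfolding cyc_set_def Un_iff by (elim disjE) (blast, simp)
    then have "\<exists>Cs. H = (\<Union>C\<in>Cs. fst C, \<Union>C\<in>Cs. snd C) \<and> 
        finite Cs \<and> Cs \<noteq> {} \<and> (\<forall>C\<in>Cs. cycle_of E C) \<and>
        (\<forall>C1\<in>Cs. \<forall>C2\<in>Cs. C1 \<noteq> C2 \<longrightarrow> fst C1 \<inter> fst C2 = {})" by (simp only: mem_Collect_eq)
    then show ?thesis using that by (elim exE conjE) simp
  qed
  have sndH: "snd H = (\<Union>C\<in>Cs. snd C)" and fstH: "fst H = (\<Union>C\<in>Cs. fst C)" using Cs(1) by simp_all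
  obtain C0 where C0: "C0 \<in> Cs" "u \<in> fst C0" using u unfolding fstH by blast
  have same: "C = C0" if "C \<in> Cs" "u \<in> fst C" for C
    using that C0 Cs(3) by blast
  have out: "(u, j) \<in> snd H \<longleftrightarrow> (u, j) \<in> snd C0" for j
  proof
    assume "(u, j) \<in> snd H"
    then obtain C where C: "C \<in> Cs" "(u, j) \<in> snd C" unfolding sndH by blast
    have cC: "cycle_of E C" using Cs(2) C(1) by blast
    have "u \<in> fst C" by (rule cycle_src(1)[OF cC C(2)])
    then have "C = C0" using same C(1) by blast
    then show "(u, j) \<in> snd C0" using C(2) by simp
  next
    assume "(u, j) \<in> snd C0"
    then show "(u, j) \<in> snd H" unfolding sndH using C0(1) by blast
  qed
  have inn: "(j, u) \<in> snd H \<longleftrightarrow> (j, u) \<in> snd C0" for j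
  proof
    assume "(j, u) \<in> snd H"
    then obtain C where C: "C \<in> Cs" "(j, u) \<in> snd C" unfolding sndH by blast
    have cC: "cycle_of E C" using Cs(2) C(1) by blast
    have "u \<in> fst C" by (rule cycle_src(2)[OF cC C(2)])
    then have "C = C0" using same C(1) by blast
    then show "(j, u) \<in> snd C0" using C(2) by simp
  next
    assume "(j, u) \<in> snd C0"
    then show "(j, u) \<in> snd H" unfolding sndH using C0(1) by blast
  qed
  have cC0: "cycle_of E C0" using Cs(2) C0(1) by blast
  obtain j1 where j1: "(u, j1) \<in> snd C0" "\<And>j. (u, j) \<in> snd C0 \<Longrightarrow> j = j1"
    using cycle_out(1)[OF cC0 C0(2)] by (elim ex1E) blast
  obtain j2 where j2: "(j2, u) \<in> snd C0" "\<And>j. (j, u) \<in> snd C0 \<Longrightarrow> j = j2"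
    using cycle_out(2)[OF cC0 C0(2)] by (elim ex1E) blast
  show "\<exists>!j. (u, j) \<in> snd H"
  proof (rule ex1I[of _ j1])
    show "(u, j1) \<in> snd H" using out[of j1] j1(1) by (rule iffD2)
    show "\<And>j. (u, j) \<in> snd H \<Longrightarrow> j = j1"
    proof -
      fix j assume "(u, j) \<in> snd H"
      then have "(u, j) \<in> snd C0" by (rule iffD1[OF out[of j]])
      then show "j = j1" by (rule j1(2))
    qed
  qed
  show "\<exists>!j. (j, u) \<in> snd H"
  proof (rule ex1I[of _ j2])
    show "(j2, u) \<in> snd H" using inn[of j2] j2(1) by (rule iffD2)
    show "\<And>j. (j, u) \<in> snd H \<Longrightarrow> j = j2"
    proof -
      fix j assume "(j, u) \<in> snd H"
      then have "(j, u) \<in> snd C0" by (rule iffD1[OF inn[of j]])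
      then show "j = j2" by (rule j2(2))
    qed
  qed
qed

lemma sum_ex1:
  assumes "finite V" "\<exists>!j. P j" "\<And>j. P j \<Longrightarrow> j \<in> V"
  shows "(\<Sum>j\<in>V. if P j then 1 else 0 :: real) = 1"
proof -
  obtain j0 where j0: "P j0" "\<And>j. P j \<Longrightarrow> j = j0" using assms(2) by blast
  have "(\<Sum>j\<in>V. if P j then 1 else 0 :: real) = (\<Sum>j\<in>V. if j = j0 then 1 else 0)"
  proof (rule sum.cong[OF refl])
    fix j assume "j \<in> V"
    have "P j \<longleftrightarrow> j = j0" using j0 by blast
    then show "(if P j then 1 else 0 :: real) = (if j = j0 then 1 else 0)" by simp
  qed
  also have "\<dots> = 1" using assms(1,3) j0(1) by simp
  finally show ?thesis .
qed

theorem corollary3p8: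
  fixes V :: "'a set" and E :: "('a \<times> 'a) set"
  assumes "digraph V E"
    and "strongly_connected V E"
    and "E \<noteq> {}"
  shows "doubly_stochasticable V E \<longleftrightarrow>
           (\<exists>S \<xi>. spanning_cyc_family V E S \<and> card S = \<xi> \<and> \<xi> \<ge> ds V E)"
proof -
  have fin: "finite V" and EV: "E \<subseteq> V \<times> V" using assms(1) unfolding digraph_def by auto
  have finE: "finite E" using fin EV finite_subset by blast
  have Vne: "V \<noteq> {}" using assms(3) EV by auto
  have ds_le: "ds V E \<le> card S" if "spanning_cyc_family V E S" for S
    unfolding ds_def using that by (intro Least_le) blast
  show ?thesis
  proof
    assume "doubly_stochasticable V E"
    then obtain A where adj: "adjacency_matrix_of V E A" and dsA: "doubly_stochastic V A"
      unfolding doubly_stochasticable_def by blast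
    have nn: "\<And>i j. i\<in>V \<Longrightarrow> j\<in>V \<Longrightarrow> A i j \<ge> 0" using adj unfolding adjacency_matrix_of_def by blast
    have posE: "\<And>i j. i\<in>V \<Longrightarrow> j\<in>V \<Longrightarrow> A i j > 0 \<longleftrightarrow> (i, j) \<in> E" using adj unfolding adjacency_matrix_of_def by blast
    have row: "\<And>i. i\<in>V \<Longrightarrow> (\<Sum>j\<in>V. A i j) = 1" and col: "\<And>j. j\<in>V \<Longrightarrow> (\<Sum>i\<in>V. A i j) = 1"
      using dsA unfolding doubly_stochastic_def by auto
    have exs: "\<exists>\<sigma>. \<sigma> permutes V \<and> \<sigma> (fst e) = snd e \<and> (\<forall>k\<in>V. A k (\<sigma> k) > 0)" if e: "e \<in> E" for e
    proof -
      have "fst e \<in> V" "snd e \<in> V" using e EV by auto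
      moreover then have "A (fst e) (snd e) > 0" using posE e by simp
      ultimately show ?thesis by (intro perm_through[OF fin nn row col])
    qed
    define \<sigma>e where "\<sigma>e = (\<lambda>e. SOME \<sigma>. \<sigma> permutes V \<and> \<sigma> (fst e) = snd e \<and> (\<forall>k\<in>V. A k (\<sigma> k) > 0))"
    have \<sigma>e_all: "\<sigma>e e permutes V \<and> \<sigma>e e (fst e) = snd e \<and> (\<forall>k\<in>V. A k (\<sigma>e e k) > 0)" if "e \<in> E" for e
      unfolding \<sigma>e_def by (rule someI_ex[OF exs[OF that]])
    have \<sigma>e: "\<sigma>e e permutes V" "\<sigma>e e (fst e) = snd e" "\<forall>k\<in>V. A k (\<sigma>e e k) > 0" if "e \<in> E" for e
      using \<sigma>e_all[OF that] by simp_all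
    have \<sigma>E: "\<forall>k\<in>V. (k, \<sigma>e e k) \<in> E" if "e \<in> E" for e
    proof
      fix k assume k: "k \<in> V"
      have "\<sigma>e e k \<in> V" using permutes_in_image[OF \<sigma>e(1)[OF that]] k by simp
      then show "(k, \<sigma>e e k) \<in> E" using posE[OF k] \<sigma>e(3)[OF that] k by blast
    qed
    define H where "H = (\<lambda>e. (V, {(k, \<sigma>e e k) | k. k \<in> V}))"
    define S where "S = H ` E"
    have "spanning_cyc_family V E S"
      unfolding spanning_cyc_family_def
    proof (intro conjI)
      show "finite S" unfolding S_def using finE by simp
      show "S \<subseteq> cyc_set V E"
      proof
        fix h assume "h \<in> S"
        then obtain e where e: "e \<in> E" "h = H e" unfolding S_def by blast
        show "h \<in> cyc_set V E" unfolding e H_def by (rule perm_cyc[OF fin \<sigma>e(1)[OF e(1)] \<sigma>E[OF e(1)] Vne])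
      qed
      show "\<forall>H\<in>S. fst H = V" unfolding S_def H_def by simp
      show "generates S V E" unfolding generates_def
      proof
        show "(\<Union>H\<in>S. fst H) = V" unfolding S_def H_def using assms(3) by auto
        show "(\<Union>H\<in>S. snd H) = E"
        proof
          show "(\<Union>H\<in>S. snd H) \<subseteq> E"
          proof
            fix p assume "p \<in> (\<Union>H\<in>S. snd H)"
            then obtain e where e: "e \<in> E" "p \<in> snd (H e)" unfolding S_def by blast
            then obtain k where k: "k \<in> V" "p = (k, \<sigma>e e k)" unfolding H_def by auto
            show "p \<in> E" using \<sigma>E[OF e(1)] k by simp
          qed
          show "E \<subseteq> (\<Union>H\<in>S. snd H)"
          proof
            fix e assume e: "e \<in> E"
            then have "fst e \<in> V" using EV by auto
            then have "(fst e, \<sigma>e e (fst e)) \<in> snd (H e)" unfolding H_def by auto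
            then have "e \<in> snd (H e)" using \<sigma>e(2)[OF e] by simp
            then show "e \<in> (\<Union>H\<in>S. snd H)" unfolding S_def using e by blast
          qed
        qed
      qed
    qed
    then show "\<exists>S \<xi>. spanning_cyc_family V E S \<and> card S = \<xi> \<and> \<xi> \<ge> ds V E" using ds_le by blast
  next
    assume "\<exists>S \<xi>. spanning_cyc_family V E S \<and> card S = \<xi> \<and> \<xi> \<ge> ds V E"
    then obtain S where S: "finite S" "S \<subseteq> cyc_set V E" "generates S V E" "\<forall>H\<in>S. fst H = V"
      unfolding spanning_cyc_family_def by blast
    have gen1: "(\<Union>H\<in>S. snd H) = E" using S(3) unfolding generates_def by blast
    define S' where "S' = {H\<in>S. snd H \<noteq> {}}"
    have finS': "finite S'" unfolding S'_def using S(1) by simp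
    have S'ne: "S' \<noteq> {}"
    proof -
      obtain e where "e \<in> E" using assms(3) by blast
      then obtain H where "H \<in> S" "e \<in> snd H" using gen1 by blast
      then have "H \<in> S'" unfolding S'_def by blast
      then show ?thesis by blast
    qed
    have m: "real (card S') > 0" using finS' S'ne by (simp add: card_gt_0_iff)
    have sndE: "\<And>H. H \<in> S \<Longrightarrow> snd H \<subseteq> E" using gen1 by blast
    have inE: "(i, j) \<in> E \<longleftrightarrow> (\<exists>H\<in>S'. (i, j) \<in> snd H)" for i j
      using gen1 sndE unfolding S'_def by blast
    define A where "A = (\<lambda>i j. (\<Sum>H\<in>S'. if (i, j) \<in> snd H then 1 else 0 :: real) / real (card S'))"
    have adj: "adjacency_matrix_of V E A" unfolding adjacency_matrix_of_def
    proof (intro ballI conjI)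
      fix i j assume "i \<in> V" "j \<in> V"
      have snn: "(\<Sum>H\<in>S'. if (i, j) \<in> snd H then 1 else 0 :: real) \<ge> 0" by (intro sum_nonneg) auto
      then show "A i j \<ge> 0" unfolding A_def using m by simp
      have "(\<Sum>H\<in>S'. if (i, j) \<in> snd H then 1 else 0 :: real) > 0 \<longleftrightarrow> (\<exists>H\<in>S'. (i, j) \<in> snd H)"
      proof
        assume "(\<Sum>H\<in>S'. if (i, j) \<in> snd H then 1 else 0 :: real) > 0"
        show "\<exists>H\<in>S'. (i, j) \<in> snd H"
        proof (rule ccontr)
          assume "\<not> (\<exists>H\<in>S'. (i, j) \<in> snd H)"
          then have "(\<Sum>H\<in>S'. if (i, j) \<in> snd H then 1 else 0 :: real) = 0" by (intro sum.neutral) auto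
          with \<open>(\<Sum>H\<in>S'. if (i, j) \<in> snd H then 1 else 0 :: real) > 0\<close> show False by simp
        qed
      next
        assume "\<exists>H\<in>S'. (i, j) \<in> snd H"
        then obtain H where H: "H \<in> S'" "(i, j) \<in> snd H" by blast
        show "(\<Sum>H\<in>S'. if (i, j) \<in> snd H then 1 else 0 :: real) > 0"
          by (rule sum_pos2[OF finS' H(1)]) (use H in auto)
      qed
      then show "A i j > 0 \<longleftrightarrow> (i, j) \<in> E" unfolding A_def inE using m by (simp add: zero_less_divide_iff)
    qed
    have cov: "\<And>H u. H \<in> S' \<Longrightarrow> u \<in> V \<Longrightarrow> (\<exists>!j. (u, j) \<in> snd H) \<and> (\<exists>!j. (j, u) \<in> snd H)"
    proof -
      fix H u assume H: "H \<in> S'" and u: "u \<in> V"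
      then have H1: "H \<in> cyc_set V E" "snd H \<noteq> {}" "u \<in> fst H" using S(2,4) unfolding S'_def by auto
      show "(\<exists>!j. (u, j) \<in> snd H) \<and> (\<exists>!j. (j, u) \<in> snd H)"
        using cyc_cover[OF H1] by blast
    qed
    have inV: "\<And>H a b. H \<in> S' \<Longrightarrow> (a, b) \<in> snd H \<Longrightarrow> a \<in> V \<and> b \<in> V"
      using sndE EV unfolding S'_def by blast
    have "doubly_stochastic V A" unfolding doubly_stochastic_def
    proof (intro conjI ballI)
      fix i assume i: "i \<in> V"
      have "(\<Sum>j\<in>V. A i j) = (\<Sum>j\<in>V. \<Sum>H\<in>S'. if (i, j) \<in> snd H then 1 else 0 :: real) / real (card S')"
        unfolding A_def by (simp add: sum_divide_distrib)
      also have "(\<Sum>j\<in>V. \<Sum>H\<in>S'. if (i, j) \<in> snd H then 1 else 0 :: real) = (\<Sum>H\<in>S'. \<Sum>j\<in>V. if (i, j) \<in> snd H then 1 else 0 :: real)"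
        by (rule sum.swap)
      also have "\<dots> = (\<Sum>H\<in>S'. 1)"
      proof (rule sum.cong[OF refl])
        fix H assume H: "H \<in> S'"
        show "(\<Sum>j\<in>V. if (i, j) \<in> snd H then 1 else 0 :: real) = 1"
          by (rule sum_ex1[OF fin]) (use cov[OF H i] inV[OF H] in auto)
      qed
      finally show "(\<Sum>j\<in>V. A i j) = 1" using m by simp
    next
      fix j assume j: "j \<in> V"
      have "(\<Sum>i\<in>V. A i j) = (\<Sum>i\<in>V. \<Sum>H\<in>S'. if (i, j) \<in> snd H then 1 else 0 :: real) / real (card S')"
        unfolding A_def by (simp add: sum_divide_distrib)
      also have "(\<Sum>i\<in>V. \<Sum>H\<in>S'. if (i, j) \<in> snd H then 1 else 0 :: real) = (\<Sum>H\<in>S'. \<Sum>i\<in>V. if (i, j) \<in> snd H then 1 else 0 :: real)"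
        by (rule sum.swap)
      also have "\<dots> = (\<Sum>H\<in>S'. 1)"
      proof (rule sum.cong[OF refl])
        fix H assume H: "H \<in> S'"
        show "(\<Sum>i\<in>V. if (i, j) \<in> snd H then 1 else 0 :: real) = 1"
          by (rule sum_ex1[OF fin]) (use cov[OF H j] inV[OF H] in auto)
      qed
      finally show "(\<Sum>i\<in>V. A i j) = 1" using m by simp
    qed
    then show "doubly_stochasticable V E" unfolding doubly_stochasticable_def using adj by blast
  qed
qed

end
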